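(* Let $(A,\circ,-,\sqcup)$ be a minus-algebra with override, and let $F$ be a filter of the right normal band $(A,\circ)$. Then $F$ is prime (i.e. whenever $a\in F$ and $b\in A$, either $b\in F$ or $a-b\in F$) if and only if for all $a,b\in A$, $a\sqcup b\in F$ implies $a\in F$ or $b\in F$.
   Context: A minus-algebra $(A,\circ,-)$ satisfies: $x\circ y=y-(y-x)$; $(A,\circ)$ is a right normal band (semigroup with $x\circ x=x$, $(x\circ y)\circ z=(y\circ x)\circ z$); there is an element $0$ with $x-x=0$ for all $x$; $x\circ0=0\circ x=0$; $(x-y)\circ x=x-y$; $(x-y)\circ y=0$; $(x-y)\circ z=(x\circ z)-y$; and $s-x=t-x\ \&\ x\circ s=x\circ t\Rightarrow s=t$. A minus-algebra with override additionally has $\sqcup$ with $(x\sqcup y)-x=y-x$ and $x\circ(x\sqcup y)=x$. Define $f\lesssim g$ iff $g\circ f=f$. A filter of $(A,\circ)$ is a non-empty $F\subseteq A$ closed under $\circ$ with $a\in F$, $a\lesssim b\Rightarrow b\in F$. *)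

theory Defs
  imports Main
begin

text \<open>A right normal band (A, comp): a semigroup with idempotence and
  (x comp y) comp z = (y comp x) comp z.  The carrier is the whole type.\<close>
definition right_normal_band :: "('a \<Rightarrow> 'a \<Rightarrow> 'a) \<Rightarrow> bool" where
  "right_normal_band c \<longleftrightarrow>
     (\<forall>x y z. c (c x y) z = c x (c y z)) \<and>
     (\<forall>x. c x x = x) \<and>
     (\<forall>x y z. c (c x y) z = c (c y x) z)"

definition minus_algebra :: "('a \<Rightarrow> 'a \<Rightarrow> 'a) \<Rightarrow> ('a \<Rightarrow> 'a \<Rightarrow> 'a) \<Rightarrow> bool" where
  "minus_algebra c m \<longleftrightarrow>
     (\<forall>x y. c x y = m y (m y x)) \<and>
     right_normal_band c \<and>
     (\<exists>z. (\<forall>x. m x x = z) \<and> (\<forall>x. c x z = z \<and> c z x = z) \<and>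
          (\<forall>x y. c (m x y) y = z)) \<and>
     (\<forall>x y. c (m x y) x = m x y) \<and>
     (\<forall>x y w. c (m x y) w = m (c x w) y) \<and>
     (\<forall>s t x. m s x = m t x \<and> c x s = c x t \<longrightarrow> s = t)"

definition minus_algebra_override ::
  "('a \<Rightarrow> 'a \<Rightarrow> 'a) \<Rightarrow> ('a \<Rightarrow> 'a \<Rightarrow> 'a) \<Rightarrow> ('a \<Rightarrow> 'a \<Rightarrow> 'a) \<Rightarrow> bool" where
  "minus_algebra_override c m u \<longleftrightarrow>
     minus_algebra c m \<and>
     (\<forall>x y. m (u x y) x = m y x) \<and>
     (\<forall>x y. c x (u x y) = x)"

definition band_le :: "('a \<Rightarrow> 'a \<Rightarrow> 'a) \<Rightarrow> 'a \<Rightarrow> 'a \<Rightarrow> bool" where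
  "band_le c f g \<longleftrightarrow> c g f = f"

definition band_filter :: "('a \<Rightarrow> 'a \<Rightarrow> 'a) \<Rightarrow> 'a set \<Rightarrow> bool" where
  "band_filter c F \<longleftrightarrow>
     F \<noteq> {} \<and>
     (\<forall>a\<in>F. \<forall>b\<in>F. c a b \<in> F) \<and>
     (\<forall>a b. a \<in> F \<and> band_le c a b \<longrightarrow> b \<in> F)"

definition prime_filter :: "('a \<Rightarrow> 'a \<Rightarrow> 'a) \<Rightarrow> 'a set \<Rightarrow> bool" where
  "prime_filter m F \<longleftrightarrow> (\<forall>a b. a \<in> F \<longrightarrow> b \<in> F \<or> m a b \<in> F)"

end

theory Submission
  imports Defs
begin

theorem proposition3p13:
  fixes c m u :: "'a \<Rightarrow> 'a \<Rightarrow> 'a" and F :: "'a set"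
  assumes "minus_algebra_override c m u"
    and "band_filter c F"
  shows "prime_filter m F \<longleftrightarrow> (\<forall>a b. u a b \<in> F \<longrightarrow> a \<in> F \<or> b \<in> F)"
proof -
  have D: "minus_algebra c m" "\<forall>x y. m (u x y) x = m y x" "\<forall>x y. c x (u x y) = x"
    using assms(1) unfolding minus_algebra_override_def by blast+
  have R: "right_normal_band c" using D(1) unfolding minus_algebra_def by blast
  have assoc: "\<And>x y z. c (c x y) z = c x (c y z)"
    and idem: "\<And>x. c x x = x"
    and rn: "\<And>x y z. c (c x y) z = c (c y x) z"
    using R unfolding right_normal_band_def by blast+
  have m1: "\<And>x y. c (m x y) x = m x y"
    and m2: "\<And>x y w. c (m x y) w = m (c x w) y"
    and canc: "\<And>s t x. m s x = m t x \<Longrightarrow> c x s = c x t \<Longrightarrow> s = t"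
    using D(1) unfolding minus_algebra_def by blast+
  have o1: "\<And>x y. m (u x y) x = m y x"
    and o2: "\<And>x y. c x (u x y) = x" using D(2,3) by blast+
  have up: "\<And>a b. a \<in> F \<Longrightarrow> c b a = a \<Longrightarrow> b \<in> F"
    using assms(2) unfolding band_filter_def band_le_def by blast
  have sw: "\<And>x y. c y x = y \<Longrightarrow> c x y = y"
  proof -
    fix x y assume h: "c y x = y"
    have "c x y = c x (c y x)" using h by simp
    also have "\<dots> = c (c x y) x" using assoc by simp
    also have "\<dots> = c (c y x) x" using rn by simp
    also have "\<dots> = y" using h by simp
    finally show "c x y = y" .
  qed
  have le1: "\<And>x y. c x (m x y) = m x y" using sw m1 by blast
  have mm: "\<And>a b. m (m a b) b = m a b"
  proof -
    fix a b
    have "c (m a b) (m a b) = m (c a (m a b)) b" using m2 by blast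
    then show "m (m a b) b = m a b" using idem le1 by simp
  qed
  show ?thesis
  proof
    assume p: "prime_filter m F"
    show "\<forall>a b. u a b \<in> F \<longrightarrow> a \<in> F \<or> b \<in> F"
    proof (intro allI impI)
      fix a b assume "u a b \<in> F"
      then have "a \<in> F \<or> m (u a b) a \<in> F" using p unfolding prime_filter_def by blast
      then show "a \<in> F \<or> b \<in> F" using o1 up le1 by metis
    qed
  next
    assume q: "\<forall>a b. u a b \<in> F \<longrightarrow> a \<in> F \<or> b \<in> F"
    show "prime_filter m F" unfolding prime_filter_def
    proof (intro allI impI)
      fix a b assume aF: "a \<in> F"
      let ?w = "u b (m a b)"
      have e1: "m (c ?w a) b = m a b"
      proof -
        have "m (c ?w a) b = c (m ?w b) a" using m2 by simp
        also have "\<dots> = c (m (m a b) b) a" using o1 by simp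
        also have "\<dots> = m (c (m a b) a) b" using m2 by simp
        also have "\<dots> = m a b" using m1 mm by simp
        finally show ?thesis .
      qed
      have e2: "c b (c ?w a) = c b a" using assoc o2 by metis
      have "c ?w a = a" using canc[OF e1 e2] .
      then have "?w \<in> F" using up aF by blast
      then show "b \<in> F \<or> m a b \<in> F" using q by blast
    qed
  qed
qed

end
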